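(* Let $(M,\phi,\xi,\eta,g)$ be a $(2n+1)$-dimensional Kenmotsu manifold whose metric $g$ is a conformal $\eta$-Einstein soliton, i.e. $$(\mathcal{L}_\xi g)(X,Y)+2S(X,Y)+\Big[2\lambda-r+\Big(p+\frac{2}{2n+1}\Big)\Big]g(X,Y)+2\mu\,\eta(X)\eta(Y)=0$$ for all vector fields $X,Y$ on $M$, where $\lambda,\mu$ are real constants. Then $M$ is $\eta$-Einstein and its scalar curvature is $r=\big(p+\frac{2}{2n+1}\big)-4n+2\lambda+2\mu$.
   Context: An almost contact metric manifold $(M,\phi,\xi,\eta,g)$ of dimension $2n+1$ consists of a $(1,1)$-tensor field $\phi$, a vector field $\xi$, a 1-form $\eta$ and a Riemannian metric $g$ with $\phi^2X=-X+\eta(X)\xi$, $\eta(\xi)=1$, $\eta\circ\phi=0$, $\phi\xi=0$, $g(\phi X,\phi Y)=g(X,Y)-\eta(X)\eta(Y)$, $g(X,\xi)=\eta(X)$. It is a Kenmotsu manifold if, with $\nabla$ the Levi-Civita connection of $g$, $(\nabla_X\phi)Y=-g(X,\phi Y)\xi-\eta(Y)\phi X$ and $\nabla_X\xi=X-\eta(X)\xi$ for all vector fields $X,Y$. $S$ denotes the Ricci tensor, $r$ the scalar curvature of $g$, $\mathcal{L}_\xi$ the Lie derivative along $\xi$, and $p$ is a scalar non-dynamical field (a time-dependent scalar field). A manifold is $\eta$-Einstein if $S=a\,g+b\,\eta\otimes\eta$ for some functions $a,b$. *)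

theory Defs
  imports "HOL-Analysis.Analysis"
begin

text \<open>Points of a chart domain U (an open subset of R^m, m = CARD('m)) are vectors
  x :: real^'m.  Tensor fields are given by their component functions:
  g x i j = g_ij, phi x k j = phi^k_j, xi x k = xi^k, eta x i = eta_i.
  Tangent vectors at x are v :: real^'m (components v^i).\<close>

definition pd :: "(real^'m \<Rightarrow> real) \<Rightarrow> 'm \<Rightarrow> real^'m \<Rightarrow> real" where
  "pd f i x = deriv (\<lambda>t. f (x + t *\<^sub>R axis i 1)) 0"

fun coord_Ck :: "nat \<Rightarrow> (real^'m) set \<Rightarrow> (real^'m \<Rightarrow> real) \<Rightarrow> bool" where
  "coord_Ck 0 U f = continuous_on U f"
| "coord_Ck (Suc k) U f = (f differentiable_on U \<and> (\<forall>i. coord_Ck k U (pd f i)))"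

definition coord_smooth :: "(real^'m) set \<Rightarrow> (real^'m \<Rightarrow> real) \<Rightarrow> bool" where
  "coord_smooth U f = (\<forall>k. coord_Ck k U f)"

definition bil :: "('m \<Rightarrow> 'm \<Rightarrow> real) \<Rightarrow> real^'m \<Rightarrow> real^'m \<Rightarrow> real" where
  "bil T v w = (\<Sum>i\<in>UNIV. \<Sum>j\<in>UNIV. T i j * v$i * w$j)"

definition form1 :: "('m \<Rightarrow> real) \<Rightarrow> real^'m \<Rightarrow> real" where
  "form1 e v = (\<Sum>i\<in>UNIV. e i * v$i)"

definition endo :: "('m \<Rightarrow> 'm \<Rightarrow> real) \<Rightarrow> real^'m \<Rightarrow> real^'m" where
  "endo A v = (\<chi> k. \<Sum>j\<in>UNIV. A k j * v$j)"

definition vecf :: "('m \<Rightarrow> real) \<Rightarrow> real^'m" where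
  "vecf X = (\<chi> k. X k)"

definition riem_metric :: "(real^'m) set \<Rightarrow> (real^'m \<Rightarrow> 'm \<Rightarrow> 'm \<Rightarrow> real) \<Rightarrow> bool" where
  "riem_metric U g = ((\<forall>i j. coord_smooth U (\<lambda>x. g x i j)) \<and>
     (\<forall>x\<in>U. (\<forall>i j. g x i j = g x j i) \<and> (\<forall>v. v \<noteq> 0 \<longrightarrow> bil (g x) v v > 0)))"

definition ginv :: "(real^'m \<Rightarrow> 'm \<Rightarrow> 'm \<Rightarrow> real) \<Rightarrow> real^'m \<Rightarrow> 'm \<Rightarrow> 'm \<Rightarrow> real" where
  "ginv g x k l = matrix_inv (\<chi> a b. g x a b) $ k $ l"

text \<open>Christoffel symbols of the Levi-Civita connection: christ g x k i j = Gamma^k_ij.\<close>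
definition christ :: "(real^'m \<Rightarrow> 'm \<Rightarrow> 'm \<Rightarrow> real) \<Rightarrow> real^'m \<Rightarrow> 'm \<Rightarrow> 'm \<Rightarrow> 'm \<Rightarrow> real" where
  "christ g x k i j = (1/2) * (\<Sum>l\<in>UNIV. ginv g x k l *
     (pd (\<lambda>y. g y j l) i x + pd (\<lambda>y. g y i l) j x - pd (\<lambda>y. g y i j) l x))"

text \<open>(\<nabla>_v phi) w, with (\<nabla>_i phi)^k_j = d_i phi^k_j + Gamma^k_il phi^l_j - Gamma^l_ij phi^k_l.\<close>
definition cov_phi :: "(real^'m \<Rightarrow> 'm \<Rightarrow> 'm \<Rightarrow> real) \<Rightarrow> (real^'m \<Rightarrow> 'm \<Rightarrow> 'm \<Rightarrow> real)
    \<Rightarrow> real^'m \<Rightarrow> real^'m \<Rightarrow> real^'m \<Rightarrow> real^'m" where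
  "cov_phi g phi x v w = (\<chi> k. \<Sum>i\<in>UNIV. \<Sum>j\<in>UNIV. v$i * w$j *
     (pd (\<lambda>y. phi y k j) i x + (\<Sum>l\<in>UNIV. christ g x k i l * phi x l j)
        - (\<Sum>l\<in>UNIV. christ g x l i j * phi x k l)))"

definition cov_vec :: "(real^'m \<Rightarrow> 'm \<Rightarrow> 'm \<Rightarrow> real) \<Rightarrow> (real^'m \<Rightarrow> 'm \<Rightarrow> real)
    \<Rightarrow> real^'m \<Rightarrow> real^'m \<Rightarrow> real^'m" where
  "cov_vec g X x v = (\<chi> k. \<Sum>i\<in>UNIV. v$i *
     (pd (\<lambda>y. X y k) i x + (\<Sum>l\<in>UNIV. christ g x k i l * X x l)))"

text \<open>Riemann tensor R(d_i,d_j)d_k = R^l_ijk d_l, with R(X,Y) = [\<nabla>_X,\<nabla>_Y] - \<nabla>_[X,Y].\<close>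
definition riemann :: "(real^'m \<Rightarrow> 'm \<Rightarrow> 'm \<Rightarrow> real) \<Rightarrow> real^'m \<Rightarrow> 'm \<Rightarrow> 'm \<Rightarrow> 'm \<Rightarrow> 'm \<Rightarrow> real" where
  "riemann g x l i j k = pd (\<lambda>y. christ g y l j k) i x - pd (\<lambda>y. christ g y l i k) j x
     + (\<Sum>m\<in>UNIV. christ g x l i m * christ g x m j k - christ g x l j m * christ g x m i k)"

text \<open>Ricci tensor S(Y,Z) = trace (X \<mapsto> R(X,Y)Z).\<close>
definition ricci :: "(real^'m \<Rightarrow> 'm \<Rightarrow> 'm \<Rightarrow> real) \<Rightarrow> real^'m \<Rightarrow> 'm \<Rightarrow> 'm \<Rightarrow> real" where
  "ricci g x j k = (\<Sum>i\<in>UNIV. riemann g x i i j k)"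

definition scal :: "(real^'m \<Rightarrow> 'm \<Rightarrow> 'm \<Rightarrow> real) \<Rightarrow> real^'m \<Rightarrow> real" where
  "scal g x = (\<Sum>j\<in>UNIV. \<Sum>k\<in>UNIV. ginv g x j k * ricci g x j k)"

definition lie_g :: "(real^'m \<Rightarrow> 'm \<Rightarrow> 'm \<Rightarrow> real) \<Rightarrow> (real^'m \<Rightarrow> 'm \<Rightarrow> real)
    \<Rightarrow> real^'m \<Rightarrow> 'm \<Rightarrow> 'm \<Rightarrow> real" where
  "lie_g g X x i j = (\<Sum>k\<in>UNIV. X x k * pd (\<lambda>y. g y i j) k x
     + g x k j * pd (\<lambda>y. X y k) i x + g x i k * pd (\<lambda>y. X y k) j x)"

definition almost_contact_metric ::
  "(real^'m) set \<Rightarrow> (real^'m \<Rightarrow> 'm \<Rightarrow> 'm \<Rightarrow> real) \<Rightarrow> (real^'m \<Rightarrow> 'm \<Rightarrow> real)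
   \<Rightarrow> (real^'m \<Rightarrow> 'm \<Rightarrow> real) \<Rightarrow> (real^'m \<Rightarrow> 'm \<Rightarrow> 'm \<Rightarrow> real) \<Rightarrow> bool" where
  "almost_contact_metric U phi xi eta g =
    (riem_metric U g \<and>
     (\<forall>k j. coord_smooth U (\<lambda>x. phi x k j)) \<and> (\<forall>k. coord_smooth U (\<lambda>x. xi x k)) \<and>
     (\<forall>k. coord_smooth U (\<lambda>x. eta x k)) \<and>
     (\<forall>x\<in>U.
        (\<forall>v. endo (phi x) (endo (phi x) v) = - v + form1 (eta x) v *\<^sub>R vecf (xi x)) \<and>
        form1 (eta x) (vecf (xi x)) = 1 \<and>
        (\<forall>v. form1 (eta x) (endo (phi x) v) = 0) \<and>
        endo (phi x) (vecf (xi x)) = 0 \<and>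
        (\<forall>v w. bil (g x) (endo (phi x) v) (endo (phi x) w) = bil (g x) v w - form1 (eta x) v * form1 (eta x) w) \<and>
        (\<forall>v. bil (g x) v (vecf (xi x)) = form1 (eta x) v)))"

definition kenmotsu ::
  "(real^'m) set \<Rightarrow> (real^'m \<Rightarrow> 'm \<Rightarrow> 'm \<Rightarrow> real) \<Rightarrow> (real^'m \<Rightarrow> 'm \<Rightarrow> real)
   \<Rightarrow> (real^'m \<Rightarrow> 'm \<Rightarrow> real) \<Rightarrow> (real^'m \<Rightarrow> 'm \<Rightarrow> 'm \<Rightarrow> real) \<Rightarrow> bool" where
  "kenmotsu U phi xi eta g =
    (almost_contact_metric U phi xi eta g \<and>
     (\<forall>x\<in>U. \<forall>v w.
        cov_phi g phi x v w = (- bil (g x) v (endo (phi x) w)) *\<^sub>R vecf (xi x) - form1 (eta x) w *\<^sub>R endo (phi x) v) \<and>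
     (\<forall>x\<in>U. \<forall>v. cov_vec g xi x v = v - form1 (eta x) v *\<^sub>R vecf (xi x)))"

definition eta_einstein :: "(real^'m) set \<Rightarrow> (real^'m \<Rightarrow> 'm \<Rightarrow> real) \<Rightarrow> (real^'m \<Rightarrow> 'm \<Rightarrow> 'm \<Rightarrow> real) \<Rightarrow> bool" where
  "eta_einstein U eta g = (\<exists>a b :: real^'m \<Rightarrow> real. \<forall>x\<in>U. \<forall>v w.
      bil (ricci g x) v w = a x * bil (g x) v w + b x * form1 (eta x) v * form1 (eta x) w)"

end

theory Submission
  imports Defs
begin

lemma pd_line:
  fixes f :: "real^'m \<Rightarrow> real"
  assumes "(f has_derivative f') (at (y + s *\<^sub>R a))"
  shows "((\<lambda>t. f (y + t *\<^sub>R a)) has_real_derivative f' a) (at s)"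
proof -
  have l: "((\<lambda>t. y + t *\<^sub>R a) has_derivative (\<lambda>t. t *\<^sub>R a)) (at s)"
    by (auto intro!: derivative_eq_intros)
  have "((f \<circ> (\<lambda>t. y + t *\<^sub>R a)) has_derivative (f' \<circ> (\<lambda>t. t *\<^sub>R a))) (at s)"
    by (rule diff_chain_at[OF l]) (use assms in simp)
  moreover have "linear f'" using assms has_derivative_linear by blast
  then have "(f' \<circ> (\<lambda>t. t *\<^sub>R a)) = (\<lambda>t. f' a * t)"
    by (auto simp: linear_scale o_def)
  ultimately show ?thesis by (simp add: has_field_derivative_def o_def)
qed

lemma pd_frechet:
  fixes f :: "real^'m \<Rightarrow> real"
  assumes "(f has_derivative f') (at x)"
  shows "pd f i x = f' (axis i 1)"
proof -
  have "((\<lambda>t. f (x + t *\<^sub>R axis i 1)) has_real_derivative f' (axis i 1)) (at 0)"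
    by (rule pd_line) (use assms in simp)
  then show ?thesis unfolding pd_def by (rule DERIV_imp_deriv)
qed

lemma pd_line_diff:
  fixes f :: "real^'m \<Rightarrow> real"
  assumes "f differentiable (at (y + s *\<^sub>R axis i 1))"
  shows "((\<lambda>t. f (y + t *\<^sub>R axis i 1)) has_real_derivative pd f i (y + s *\<^sub>R axis i 1)) (at s)"
proof -
  obtain f' where f': "(f has_derivative f') (at (y + s *\<^sub>R axis i 1))"
    using assms unfolding differentiable_def by blast
  show ?thesis using pd_line[OF f'] pd_frechet[OF f'] by simp
qed

lemma pd_local:
  fixes f h :: "real^'m \<Rightarrow> real"
  assumes "open U" "x \<in> U" "\<And>y. y \<in> U \<Longrightarrow> f y = h y"
  shows "pd f i x = pd h i x"
proof -
  have c: "continuous (at 0) (\<lambda>t::real. x + t *\<^sub>R axis i 1)"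
    by (intro continuous_intros)
  have "open ((\<lambda>t::real. x + t *\<^sub>R axis i 1) -` U)"
    by (rule open_vimage[OF assms(1)]) (intro continuous_intros)
  moreover have "0 \<in> (\<lambda>t::real. x + t *\<^sub>R axis i 1) -` U" using assms(2) by simp
  ultimately have ev: "eventually (\<lambda>t. t \<in> (\<lambda>t::real. x + t *\<^sub>R axis i 1) -` U) (nhds 0)"
    by (rule eventually_nhds_in_open)
  have "eventually (\<lambda>t. f (x + t *\<^sub>R axis i 1) = h (x + t *\<^sub>R axis i 1)) (nhds 0)"
    by (rule eventually_mono[OF ev]) (use assms(3) in auto)
  then show ?thesis unfolding pd_def by (rule deriv_cong_ev) simp
qed

lemma pd_mult:
  fixes f h :: "real^'m \<Rightarrow> real"
  assumes "f differentiable (at x)" "h differentiable (at x)"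
  shows "pd (\<lambda>y. f y * h y) i x = pd f i x * h x + f x * pd h i x"
proof -
  obtain f' h' where f': "(f has_derivative f') (at x)" and h': "(h has_derivative h') (at x)"
    using assms unfolding differentiable_def by blast
  have "((\<lambda>y. f y * h y) has_derivative (\<lambda>v. f x * h' v + f' v * h x)) (at x)"
    by (rule has_derivative_mult[OF f' h'])
  from pd_frechet[OF this] pd_frechet[OF f'] pd_frechet[OF h'] show ?thesis by simp
qed

lemma pd_sum:
  fixes f :: "'k \<Rightarrow> real^'m \<Rightarrow> real"
  assumes "finite S" "\<And>k. k \<in> S \<Longrightarrow> f k differentiable (at x)"
  shows "pd (\<lambda>y. \<Sum>k\<in>S. f k y) i x = (\<Sum>k\<in>S. pd (f k) i x)"
proof -
  have "\<forall>k\<in>S. \<exists>f'. (f k has_derivative f') (at x)" using assms(2) unfolding differentiable_def by blast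
  then obtain F where F: "\<And>k. k \<in> S \<Longrightarrow> (f k has_derivative F k) (at x)" by metis
  have "((\<lambda>y. \<Sum>k\<in>S. f k y) has_derivative (\<lambda>v. \<Sum>k\<in>S. F k v)) (at x)"
    by (rule has_derivative_sum) (use F in auto)
  from pd_frechet[OF this] show ?thesis using pd_frechet[OF F] by simp
qed

lemma pd_add:
  fixes f h :: "real^'m \<Rightarrow> real"
  assumes "f differentiable (at x)" "h differentiable (at x)"
  shows "pd (\<lambda>y. f y + h y) i x = pd f i x + pd h i x"
proof -
  obtain f' h' where f': "(f has_derivative f') (at x)" and h': "(h has_derivative h') (at x)"
    using assms unfolding differentiable_def by blast
  from pd_frechet[OF has_derivative_add[OF f' h']] pd_frechet[OF f'] pd_frechet[OF h'] show ?thesis by simp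
qed

lemma pd_diff:
  fixes f h :: "real^'m \<Rightarrow> real"
  assumes "f differentiable (at x)" "h differentiable (at x)"
  shows "pd (\<lambda>y. f y - h y) i x = pd f i x - pd h i x"
proof -
  obtain f' h' where f': "(f has_derivative f') (at x)" and h': "(h has_derivative h') (at x)"
    using assms unfolding differentiable_def by blast
  from pd_frechet[OF has_derivative_diff[OF f' h']] pd_frechet[OF f'] pd_frechet[OF h'] show ?thesis by simp
qed

lemma pd_const: "pd (\<lambda>y::real^'m. c) i x = 0"
proof -
  have "((\<lambda>y::real^'m. c) has_derivative (\<lambda>v. 0)) (at x)" by simp
  from pd_frechet[OF this] show ?thesis by simp
qed

lemma box_mvt:
  fixes f :: "real^'m \<Rightarrow> real"
  assumes U: "open U" and B: "ball x r \<subseteq> U" and h: "0 < h" "2*h < r"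
    and fd: "f differentiable_on U" and fid: "pd f i differentiable_on U"
  shows "\<exists>s t. 0<s \<and> s<h \<and> 0<t \<and> t<h \<and>
     f (x + h *\<^sub>R axis i 1 + h *\<^sub>R axis j 1) - f (x + h *\<^sub>R axis i 1) - f (x + h *\<^sub>R axis j 1) + f x
       = h * h * pd (pd f i) j (x + s *\<^sub>R axis i 1 + t *\<^sub>R axis j 1)"
proof -
  define a :: "real^'m" where "a = axis i 1"
  define b :: "real^'m" where "b = axis j 1"
  have na: "norm a = 1" "norm b = 1" unfolding a_def b_def by simp_all
  have inU: "x + s *\<^sub>R a + t *\<^sub>R b \<in> U" if "0 \<le> s" "s \<le> h" "0 \<le> t" "t \<le> h" for s t
  proof -
    have "norm (s *\<^sub>R a + t *\<^sub>R b) \<le> norm (s *\<^sub>R a) + norm (t *\<^sub>R b)" by (rule norm_triangle_ineq)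
    also have "\<dots> = s + t" using na that by simp
    finally have "norm (s *\<^sub>R a + t *\<^sub>R b) < r" using that h by simp
    then have "dist x (x + s *\<^sub>R a + t *\<^sub>R b) < r" 
    proof -
      have "x - (x + s *\<^sub>R a + t *\<^sub>R b) = - (s *\<^sub>R a + t *\<^sub>R b)" by (simp add: algebra_simps)
      then show ?thesis using \<open>norm (s *\<^sub>R a + t *\<^sub>R b) < r\<close> by (simp only: dist_norm norm_minus_cancel)
    qed
    then show ?thesis using B by auto
  qed
  have fda: "f differentiable (at z)" if "z \<in> U" for z
    using fd U that differentiable_on_eq_differentiable_at by blast
  have fida: "pd f i differentiable (at z)" if "z \<in> U" for z
    using fid U that differentiable_on_eq_differentiable_at by blast
  define \<phi> where "\<phi> s = f ((x + h *\<^sub>R b) + s *\<^sub>R a) - f (x + s *\<^sub>R a)" for s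
  have "DERIV \<phi> s :> pd f i ((x + h *\<^sub>R b) + s *\<^sub>R a) - pd f i (x + s *\<^sub>R a)"
    if "0 \<le> s" "s \<le> h" for s
    unfolding \<phi>_def a_def
  proof (rule DERIV_diff)
    show "((\<lambda>s. f (x + h *\<^sub>R b + s *\<^sub>R axis i 1)) has_real_derivative pd f i (x + h *\<^sub>R b + s *\<^sub>R axis i 1)) (at s)"
      by (rule pd_line_diff, rule fda) (use inU[of s h] that h in \<open>simp add: a_def algebra_simps\<close>)
    show "((\<lambda>s. f (x + s *\<^sub>R axis i 1)) has_real_derivative pd f i (x + s *\<^sub>R axis i 1)) (at s)"
      by (rule pd_line_diff, rule fda) (use inU[of s 0] that h in \<open>simp add: a_def algebra_simps\<close>)
  qed
  from MVT2[OF h(1) this] obtain s where s: "0 < s" "s < h"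
    "\<phi> h - \<phi> 0 = (h - 0) * (pd f i ((x + h *\<^sub>R b) + s *\<^sub>R a) - pd f i (x + s *\<^sub>R a))"
    by auto
  define \<psi> where "\<psi> t = pd f i ((x + s *\<^sub>R a) + t *\<^sub>R b)" for t
  have "DERIV \<psi> t :> pd (pd f i) j ((x + s *\<^sub>R a) + t *\<^sub>R b)" if "0 \<le> t" "t \<le> h" for t
    unfolding \<psi>_def b_def
    by (rule pd_line_diff, rule fida) (use inU[of s t] that s in \<open>simp add: b_def\<close>)
  from MVT2[OF h(1) this] obtain t where t: "0 < t" "t < h"
    "\<psi> h - \<psi> 0 = (h - 0) * pd (pd f i) j ((x + s *\<^sub>R a) + t *\<^sub>R b)"
    by auto
  have "f (x + h *\<^sub>R a + h *\<^sub>R b) - f (x + h *\<^sub>R a) - f (x + h *\<^sub>R b) + f x = \<phi> h - \<phi> 0"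
    unfolding \<phi>_def by (simp add: algebra_simps)
  also have "\<dots> = h * (\<psi> h - \<psi> 0)" using s(3) unfolding \<psi>_def by (simp add: algebra_simps)
  also have "\<dots> = h * h * pd (pd f i) j (x + s *\<^sub>R a + t *\<^sub>R b)" using t(3) by simp
  finally show ?thesis using s t unfolding a_def b_def by blast
qed

lemma schwarz:
  fixes f :: "real^'m \<Rightarrow> real"
  assumes U: "open U" "x \<in> U"
    and fd: "f differentiable_on U" and fid: "pd f i differentiable_on U" and fjd: "pd f j differentiable_on U"
    and c1: "continuous_on U (pd (pd f i) j)" and c2: "continuous_on U (pd (pd f j) i)"
  shows "pd (pd f i) j x = pd (pd f j) i x"
proof (rule ccontr)
  assume ne: "pd (pd f i) j x \<noteq> pd (pd f j) i x"
  define e where "e = \<bar>pd (pd f i) j x - pd (pd f j) i x\<bar> / 2"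
  have e: "e > 0" using ne by (simp add: e_def)
  obtain r where r: "r > 0" "ball x r \<subseteq> U" using U open_contains_ball by blast
  have "isCont (pd (pd f i) j) x" using c1 U continuous_on_eq_continuous_at by blast
  then obtain d1 where d1: "d1 > 0" "\<And>y. dist y x < d1 \<Longrightarrow> dist (pd (pd f i) j y) (pd (pd f i) j x) < e"
    using e unfolding continuous_at_eps_delta by blast
  have "isCont (pd (pd f j) i) x" using c2 U continuous_on_eq_continuous_at by blast
  then obtain d2 where d2: "d2 > 0" "\<And>y. dist y x < d2 \<Longrightarrow> dist (pd (pd f j) i y) (pd (pd f j) i x) < e"
    using e unfolding continuous_at_eps_delta by blast
  define h where "h = min r (min d1 d2) / 4"
  have h: "0 < h" "2*h < r" "2*h < d1" "2*h < d2" using r d1 d2 by (auto simp: h_def)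
  have close: "dist (x + s *\<^sub>R axis i 1 + t *\<^sub>R axis j 1) x < 2*h" if "0<s" "s<h" "0<t" "t<h" for s t
  proof -
    have "norm (s *\<^sub>R (axis i 1::real^'m) + t *\<^sub>R (axis j 1::real^'m)) \<le> norm (s *\<^sub>R (axis i 1::real^'m)) + norm (t *\<^sub>R (axis j 1::real^'m))"
      by (rule norm_triangle_ineq)
    also have "\<dots> = s + t" using that by simp
    finally show ?thesis using that by (simp add: dist_norm add.assoc)
  qed
  obtain s t where st: "0<s" "s<h" "0<t" "t<h" and
    A: "f (x + h *\<^sub>R axis i 1 + h *\<^sub>R axis j 1) - f (x + h *\<^sub>R axis i 1) - f (x + h *\<^sub>R axis j 1) + f x
       = h * h * pd (pd f i) j (x + s *\<^sub>R axis i 1 + t *\<^sub>R axis j 1)"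
    using box_mvt[OF U(1) r(2) h(1) h(2) fd fid] by blast
  obtain s' t' where st': "0<s'" "s'<h" "0<t'" "t'<h" and
    B: "f (x + h *\<^sub>R axis j 1 + h *\<^sub>R axis i 1) - f (x + h *\<^sub>R axis j 1) - f (x + h *\<^sub>R axis i 1) + f x
       = h * h * pd (pd f j) i (x + s' *\<^sub>R axis j 1 + t' *\<^sub>R axis i 1)"
    using box_mvt[OF U(1) r(2) h(1) h(2) fd fjd] by blast
  have "x + h *\<^sub>R axis j 1 + h *\<^sub>R axis i 1 = x + h *\<^sub>R axis i 1 + h *\<^sub>R axis j 1" by (simp add: algebra_simps)
  with A B have "h * h * pd (pd f i) j (x + s *\<^sub>R axis i 1 + t *\<^sub>R axis j 1) = h * h * pd (pd f j) i (x + s' *\<^sub>R axis j 1 + t' *\<^sub>R axis i 1)"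
    by (simp add: algebra_simps)
  then have eq: "pd (pd f i) j (x + s *\<^sub>R axis i 1 + t *\<^sub>R axis j 1) = pd (pd f j) i (x + s' *\<^sub>R axis j 1 + t' *\<^sub>R axis i 1)"
    using h(1) by simp
  have 1: "dist (pd (pd f i) j (x + s *\<^sub>R axis i 1 + t *\<^sub>R axis j 1)) (pd (pd f i) j x) < e"
    using d1(2) close[OF st] h by force
  have 2: "dist (pd (pd f j) i (x + s' *\<^sub>R axis j 1 + t' *\<^sub>R axis i 1)) (pd (pd f j) i x) < e"
  proof (rule d2(2))
    have "dist (x + t' *\<^sub>R axis i 1 + s' *\<^sub>R axis j 1) x < 2*h" by (rule close) (use st' in auto)
    moreover have "x + t' *\<^sub>R axis i 1 + s' *\<^sub>R axis j 1 = x + s' *\<^sub>R axis j 1 + t' *\<^sub>R axis i 1" by (simp add: algebra_simps)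
    ultimately show "dist (x + s' *\<^sub>R axis j 1 + t' *\<^sub>R axis i 1) x < d2" using h by simp
  qed
  have aux: "\<And>A a b::real. \<bar>A - a\<bar> < \<bar>a - b\<bar>/2 \<Longrightarrow> \<bar>A - b\<bar> < \<bar>a - b\<bar>/2 \<Longrightarrow> False" by (auto simp: abs_if split: if_splits)
  from 1 2 eq show False unfolding e_def dist_real_def using aux by metis
qed

lemma smooth_pd: "coord_smooth U f \<Longrightarrow> coord_smooth U (pd f i)"
  unfolding coord_smooth_def by (metis coord_Ck.simps(2))

lemma smooth_diff_on: "coord_smooth U f \<Longrightarrow> f differentiable_on U"
  unfolding coord_smooth_def by (metis coord_Ck.simps(2))

lemma smooth_cont: "coord_smooth U f \<Longrightarrow> continuous_on U f"
  unfolding coord_smooth_def by (metis coord_Ck.simps(1))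

lemma smooth_diff_at: "coord_smooth U f \<Longrightarrow> open U \<Longrightarrow> x \<in> U \<Longrightarrow> f differentiable (at x)"
  using smooth_diff_on differentiable_on_eq_differentiable_at by blast

lemma differentiable_prod_at:
  fixes f :: "'k \<Rightarrow> 'a::real_normed_vector \<Rightarrow> real"
  assumes "\<And>k. k \<in> S \<Longrightarrow> f k differentiable (at x)"
  shows "(\<lambda>y. \<Prod>k\<in>S. f k y) differentiable (at x)"
proof -
  have "\<forall>k\<in>S. \<exists>f'. (f k has_derivative f') (at x)" using assms unfolding differentiable_def by blast
  then obtain F where F: "\<And>k. k \<in> S \<Longrightarrow> (f k has_derivative F k) (at x)" by metis
  show ?thesis unfolding differentiable_def by (rule exI, rule has_derivative_prod) (use F in auto)
qed

lemma det_differentiable: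
  fixes F :: "'a::real_normed_vector \<Rightarrow> 'n::finite \<Rightarrow> 'n \<Rightarrow> real"
  assumes "\<And>a b. (\<lambda>y. F y a b) differentiable (at x)"
  shows "(\<lambda>y. det (\<chi> a b. F y a b)) differentiable (at x)"
  unfolding det_def
  by (auto intro!: differentiable_sum differentiable_mult differentiable_prod_at assms simp: finite_permutations)

lemma posdef_invertible:
  fixes A :: "real^'n^'n"
  assumes "\<forall>v. v \<noteq> 0 \<longrightarrow> bil (\<lambda>i j. A$i$j) v v > 0"
  shows "invertible A"
proof -
  have "\<forall>v. A *v v = 0 \<longrightarrow> v = 0"
  proof (intro allI impI)
    fix v assume Av: "A *v v = 0"
    have "bil (\<lambda>i j. A$i$j) v v = (\<Sum>i\<in>UNIV. v$i * (A *v v)$i)"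
      unfolding bil_def matrix_vector_mult_def by (simp add: sum_distrib_left algebra_simps)
    also have "\<dots> = 0" using Av by simp
    finally show "v = 0" using assms by force
  qed
  then show ?thesis using invertible_left_inverse matrix_left_invertible_ker by blast
qed

lemma inv_right:
  fixes A :: "real^'n^'n"
  assumes "invertible A"
  shows "A ** matrix_inv A = mat 1"
  using assms unfolding invertible_def matrix_inv_def by (rule someI_ex[where P="\<lambda>A'. A ** A' = mat 1 \<and> A' ** A = mat 1", THEN conjunct1])

lemma metric_invertible:
  fixes g :: "real^'m \<Rightarrow> 'm \<Rightarrow> 'm \<Rightarrow> real"
  assumes "riem_metric U g" "x \<in> U"
  shows "invertible (\<chi> a b. g x a b)"
  by (rule posdef_invertible) (use assms in \<open>simp add: riem_metric_def\<close>)

lemma ginv_right: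
  fixes g :: "real^'m \<Rightarrow> 'm \<Rightarrow> 'm \<Rightarrow> real"
  assumes "riem_metric U g" "x \<in> U"
  shows "(\<Sum>k\<in>UNIV. g x j k * ginv g x k l) = (if j = l then 1 else 0)"
proof -
  have "(\<chi> a b. g x a b) ** matrix_inv (\<chi> a b. g x a b) = mat 1"
    by (rule inv_right[OF metric_invertible[OF assms]])
  then have "((\<chi> a b. g x a b) ** matrix_inv (\<chi> a b. g x a b)) $ j $ l = mat 1 $ j $ l" by simp
  then show ?thesis unfolding ginv_def matrix_matrix_mult_def mat_def by simp
qed

lemma ginv_cramer:
  fixes g :: "real^'m \<Rightarrow> 'm \<Rightarrow> 'm \<Rightarrow> real"
  assumes "riem_metric U g" "x \<in> U"
  shows "ginv g x k l = det (\<chi> a b. if b = k then (axis l 1 :: real^'m) $ a else g x a b) / det (\<chi> a b. g x a b :: real^'m^'m)"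
proof -
  let ?A = "(\<chi> a b. g x a b) :: real^'m^'m"
  have inv: "invertible ?A" by (rule metric_invertible[OF assms])
  then have d: "det ?A \<noteq> 0" by (simp add: invertible_det_nz)
  have AB: "?A ** matrix_inv ?A = mat 1" by (rule inv_right[OF inv])
  have "?A *v (\<chi> k. matrix_inv ?A $ k $ l) = axis l 1"
  proof -
    have "?A *v (\<chi> k. matrix_inv ?A $ k $ l) = (\<chi> j. (?A ** matrix_inv ?A) $ j $ l)"
      unfolding matrix_vector_mult_def matrix_matrix_mult_def by simp
    also have "\<dots> = axis l 1" using AB by (simp add: mat_def axis_def vec_eq_iff)
    finally show ?thesis .
  qed
  then have "(\<chi> k. matrix_inv ?A $ k $ l) = (\<chi> k. det(\<chi> i j. if j=k then (axis l 1 :: real^'m)$i else ?A$i$j) / det ?A)"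
    using cramer[OF d] by blast
  then have "(\<chi> k. matrix_inv ?A $ k $ l) $ k = (\<chi> k. det(\<chi> i j. if j=k then (axis l 1 :: real^'m)$i else ?A$i$j) / det ?A) $ k"
    by simp
  moreover have e: "\<And>i j. ?A $ i $ j = g x i j" by simp
  ultimately show ?thesis unfolding ginv_def by (simp only: e vec_lambda_beta)
qed

lemma ginv_differentiable:
  fixes g :: "real^'m \<Rightarrow> 'm \<Rightarrow> 'm \<Rightarrow> real"
  assumes "riem_metric U g" "open U" "x \<in> U"
  shows "(\<lambda>y. ginv g y k l) differentiable (at x)"
proof -
  have gd: "(\<lambda>y. g y a b) differentiable (at x)" for a b
    using assms by (auto simp: riem_metric_def intro: smooth_diff_at)
  have inv: "invertible (\<chi> a b. g x a b)" by (rule metric_invertible[OF assms(1,3)])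
  have "(\<lambda>y. det (\<chi> a b. if b = k then (axis l 1 :: real^'m) $ a else g y a b) / det (\<chi> a b. g y a b :: real^'m^'m)) differentiable (at x)"
  proof (rule differentiable_divide)
    show "(\<lambda>y. det (\<chi> a b. if b = k then (axis l 1 :: real^'m) $ a else g y a b)) differentiable (at x)"
    proof (rule det_differentiable)
      fix a b show "(\<lambda>y. if b = k then (axis l 1 :: real^'m) $ a else g y a b) differentiable (at x)"
        by (cases "b = k") (simp_all add: gd)
    qed
    show "(\<lambda>y. det (\<chi> a b. g y a b :: real^'m^'m)) differentiable (at x)"
      by (rule det_differentiable) (use gd in auto)
    show "det (\<chi> a b. g x a b :: real^'m^'m) \<noteq> 0" using inv by (simp add: invertible_det_nz)
  qed
  then obtain D where D: "((\<lambda>y. det (\<chi> a b. if b = k then (axis l 1 :: real^'m) $ a else g y a b) / det (\<chi> a b. g y a b :: real^'m^'m)) has_derivative D) (at x)"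
    unfolding differentiable_def by blast
  have "((\<lambda>y. ginv g y k l) has_derivative D) (at x)"
    by (rule has_derivative_transform_within_open[OF D assms(2,3)]) (use ginv_cramer[OF assms(1)] in simp)
  then show ?thesis unfolding differentiable_def by blast
qed

lemma christ_differentiable:
  fixes g :: "real^'m \<Rightarrow> 'm \<Rightarrow> 'm \<Rightarrow> real"
  assumes "riem_metric U g" "open U" "x \<in> U"
  shows "(\<lambda>y. christ g y k i j) differentiable (at x)"
proof -
  have pgd: "pd (\<lambda>y. g y a b) c differentiable (at x)" for a b c
    using assms by (auto simp: riem_metric_def intro: smooth_diff_at smooth_pd)
  show ?thesis unfolding christ_def
    by (intro differentiable_mult differentiable_const differentiable_sum finite_class.finite_UNIV ballI
          ginv_differentiable[OF assms] differentiable_add differentiable_diff pgd)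
qed

lemma sum_delta1 [simp]: "(\<Sum>i\<in>UNIV. (if i = j then 1 else 0) * (f i::real)) = f j" for f :: "'a::finite \<Rightarrow> real"
proof -
  have "(\<Sum>i\<in>UNIV. (if i = j then 1 else 0) * (f i::real)) = (\<Sum>i\<in>UNIV. if i = j then f i else 0)"
    by (rule sum.cong) auto
  then show ?thesis by (simp add: sum.delta)
qed

lemma sum_delta2 [simp]: "(\<Sum>i\<in>UNIV. (f i::real) * (if i = j then 1 else 0)) = f j" for f :: "'a::finite \<Rightarrow> real"
  using sum_delta1[of j f] by (simp add: mult.commute)

lemma sum_delta3 [simp]: "(\<Sum>i\<in>UNIV. (if j = i then 1 else 0) * (f i::real)) = f j" for f :: "'a::finite \<Rightarrow> real"
  using sum_delta1[of j f] by (simp add: eq_commute[of j])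

lemma sum_delta4 [simp]: "(\<Sum>i\<in>UNIV. (f i::real) * (if j = i then 1 else 0)) = f j" for f :: "'a::finite \<Rightarrow> real"
  using sum_delta2[of f j] by (simp add: eq_commute[of j])

lemma axis_comp: "(axis i 1 :: real^'m) $ k = (if k = i then 1 else 0)"
  by (simp add: axis_def)

lemma bil_axis: "bil T (axis j 1) w = (\<Sum>b\<in>UNIV. T j b * w$b)"
  proof -
  have "bil T (axis j 1) w = (\<Sum>i\<in>UNIV. (if i = j then 1 else 0) * (\<Sum>b\<in>UNIV. T i b * w$b))"
    unfolding bil_def axis_comp by (simp add: sum_distrib_left algebra_simps)
  then show ?thesis by simp
qed

lemma form1_axis: "form1 e (axis i 1) = e i"
  unfolding form1_def axis_comp by simp

lemma cov_vec_axis: "cov_vec g X x (axis i 1) $ k = pd (\<lambda>y. X y k) i x + (\<Sum>l\<in>UNIV. christ g x k i l * X x l)"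
  unfolding cov_vec_def axis_comp by simp

lemma ken_facts:
  fixes g :: "real^'m \<Rightarrow> 'm \<Rightarrow> 'm \<Rightarrow> real"
  assumes K: "kenmotsu U phi xi eta g" and y: "y \<in> U"
  shows "riem_metric U g" "\<And>k. coord_smooth U (\<lambda>x. xi x k)" "\<And>k. coord_smooth U (\<lambda>x. eta x k)"
    "\<And>i j. g y i j = g y j i"
    "(\<Sum>i\<in>UNIV. eta y i * xi y i) = 1"
    "\<And>j. (\<Sum>k\<in>UNIV. g y j k * xi y k) = eta y j"
    "\<And>i k. pd (\<lambda>y. xi y k) i y + (\<Sum>l\<in>UNIV. christ g y k i l * xi y l) = (if k = i then 1 else 0) - eta y i * xi y k"
proof -
  have A: "almost_contact_metric U phi xi eta g" using K by (simp add: kenmotsu_def)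
  show "riem_metric U g" "\<And>k. coord_smooth U (\<lambda>x. xi x k)" "\<And>k. coord_smooth U (\<lambda>x. eta x k)"
    using A by (simp_all add: almost_contact_metric_def)
  show "\<And>i j. g y i j = g y j i" using A y by (simp add: almost_contact_metric_def riem_metric_def)
  show "(\<Sum>i\<in>UNIV. eta y i * xi y i) = 1"
    using A y by (simp add: almost_contact_metric_def form1_def vecf_def)
  show "\<And>j. (\<Sum>k\<in>UNIV. g y j k * xi y k) = eta y j"
  proof -
    fix j
    have "bil (g y) (axis j 1) (vecf (xi y)) = form1 (eta y) (axis j 1)"
      using A y by (simp add: almost_contact_metric_def)
    then show "(\<Sum>k\<in>UNIV. g y j k * xi y k) = eta y j" by (simp add: bil_axis form1_axis vecf_def)
  qed
  show "\<And>i k. pd (\<lambda>y. xi y k) i y + (\<Sum>l\<in>UNIV. christ g y k i l * xi y l) = (if k = i then 1 else 0) - eta y i * xi y k"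
  proof -
    fix i k
    have "cov_vec g xi y (axis i 1) = axis i 1 - form1 (eta y) (axis i 1) *\<^sub>R vecf (xi y)"
      using K y by (simp add: kenmotsu_def)
    then have "cov_vec g xi y (axis i 1) $ k = (axis i 1 - form1 (eta y) (axis i 1) *\<^sub>R vecf (xi y)) $ k" by simp
    then show "pd (\<lambda>y. xi y k) i y + (\<Sum>l\<in>UNIV. christ g y k i l * xi y l) = (if k = i then 1 else 0) - eta y i * xi y k"
      by (simp add: cov_vec_axis axis_comp form1_axis vecf_def)
  qed
qed

lemma pdg_sym:
  fixes g :: "real^'m \<Rightarrow> 'm \<Rightarrow> 'm \<Rightarrow> real"
  assumes "riem_metric U g" "open U" "x \<in> U"
  shows "pd (\<lambda>y. g y i j) k x = pd (\<lambda>y. g y j i) k x"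
  by (rule pd_local[OF assms(2,3)]) (use assms(1) in \<open>simp add: riem_metric_def\<close>)

lemma christ_sym:
  fixes g :: "real^'m \<Rightarrow> 'm \<Rightarrow> 'm \<Rightarrow> real"
  assumes "riem_metric U g" "open U" "x \<in> U"
  shows "christ g x k i j = christ g x k j i"
  unfolding christ_def using pdg_sym[OF assms, of i j] by (simp add: algebra_simps)

lemma christ_lower:
  fixes g :: "real^'m \<Rightarrow> 'm \<Rightarrow> 'm \<Rightarrow> real"
  assumes "riem_metric U g" "x \<in> U"
  shows "(\<Sum>k\<in>UNIV. g x j k * christ g x k i m) =
     (1/2) * (pd (\<lambda>y. g y m j) i x + pd (\<lambda>y. g y i j) m x - pd (\<lambda>y. g y i m) j x)"
proof -
  define T where "T l = pd (\<lambda>y. g y m l) i x + pd (\<lambda>y. g y i l) m x - pd (\<lambda>y. g y i m) l x" for l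
  have "(\<Sum>k\<in>UNIV. g x j k * christ g x k i m) = (\<Sum>k\<in>UNIV. \<Sum>l\<in>UNIV. (1/2) * (g x j k * ginv g x k l * T l))"
    unfolding christ_def T_def by (simp add: sum_distrib_left algebra_simps)
  also have "\<dots> = (\<Sum>l\<in>UNIV. (1/2) * ((\<Sum>k\<in>UNIV. g x j k * ginv g x k l) * T l))"
    by (subst sum.swap) (simp add: sum_distrib_left sum_distrib_right algebra_simps)
  also have "\<dots> = (1/2) * T j" by (simp only: ginv_right[OF assms] sum_distrib_left[symmetric] sum_delta3)
  finally show ?thesis by (simp add: T_def)
qed

lemma contract_D:
  fixes g :: "real^'m \<Rightarrow> 'm \<Rightarrow> 'm \<Rightarrow> real"
  assumes K: "kenmotsu U phi xi eta g" and U: "open U" and x: "x \<in> U"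
  shows "(\<Sum>k\<in>UNIV. g x j k * pd (\<lambda>y. xi y k) i x) = g x i j - eta x i * eta x j
     - (1/2) * (\<Sum>l\<in>UNIV. xi x l * (pd (\<lambda>y. g y l j) i x + pd (\<lambda>y. g y i j) l x - pd (\<lambda>y. g y i l) j x))"
proof -
  note F = ken_facts[OF K x]
  have D: "pd (\<lambda>y. xi y k) i x = (if k = i then 1 else 0) - eta x i * xi x k - (\<Sum>l\<in>UNIV. christ g x k i l * xi x l)" for k
    using F(7)[of k i] by linarith
  have "(\<Sum>k\<in>UNIV. g x j k * pd (\<lambda>y. xi y k) i x) =
     (\<Sum>k\<in>UNIV. g x j k * (if k = i then 1 else 0)) - eta x i * (\<Sum>k\<in>UNIV. g x j k * xi x k)
      - (\<Sum>k\<in>UNIV. \<Sum>l\<in>UNIV. xi x l * (g x j k * christ g x k i l))"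
    unfolding D by (simp add: sum_subtractf sum.distrib right_diff_distrib sum_distrib_left algebra_simps)
  also have "(\<Sum>k\<in>UNIV. \<Sum>l\<in>UNIV. xi x l * (g x j k * christ g x k i l)) = (\<Sum>l\<in>UNIV. xi x l * (\<Sum>k\<in>UNIV. g x j k * christ g x k i l))"
    by (subst sum.swap) (simp add: sum_distrib_left)
  also have "\<dots> = (\<Sum>l\<in>UNIV. xi x l * ((1/2) * (pd (\<lambda>y. g y l j) i x + pd (\<lambda>y. g y i j) l x - pd (\<lambda>y. g y i l) j x)))"
    by (simp only: christ_lower[OF F(1) x])
  also have "\<dots> = (1/2) * (\<Sum>l\<in>UNIV. xi x l * (pd (\<lambda>y. g y l j) i x + pd (\<lambda>y. g y i j) l x - pd (\<lambda>y. g y i l) j x))"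
    by (simp add: sum_distrib_left mult.assoc mult.left_commute)
  also have "(\<Sum>k\<in>UNIV. g x j k * (if k = i then 1 else 0)) = g x i j" using F(4)[of j i] by simp
  finally show ?thesis using F(6)[of j] by simp
qed

lemma lie_formula:
  fixes g :: "real^'m \<Rightarrow> 'm \<Rightarrow> 'm \<Rightarrow> real"
  assumes K: "kenmotsu U phi xi eta g" and U: "open U" and x: "x \<in> U"
  shows "lie_g g xi x i j = 2 * g x i j - 2 * eta x i * eta x j"
proof -
  note F = ken_facts[OF K x]
  have s1: "(\<Sum>k\<in>UNIV. g x k j * pd (\<lambda>y. xi y k) i x) = (\<Sum>k\<in>UNIV. g x j k * pd (\<lambda>y. xi y k) i x)"
    using F(4) by simp
  have "lie_g g xi x i j = (\<Sum>k\<in>UNIV. xi x k * pd (\<lambda>y. g y i j) k x)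
      + (\<Sum>k\<in>UNIV. g x j k * pd (\<lambda>y. xi y k) i x) + (\<Sum>k\<in>UNIV. g x i k * pd (\<lambda>y. xi y k) j x)"
    unfolding lie_g_def sum.distrib s1 ..
  also have "\<dots> = (\<Sum>l\<in>UNIV. xi x l * pd (\<lambda>y. g y i j) l x)
     + (g x i j - eta x i * eta x j - (1/2) * (\<Sum>l\<in>UNIV. xi x l * (pd (\<lambda>y. g y l j) i x + pd (\<lambda>y. g y i j) l x - pd (\<lambda>y. g y i l) j x)))
     + (g x j i - eta x j * eta x i - (1/2) * (\<Sum>l\<in>UNIV. xi x l * (pd (\<lambda>y. g y l i) j x + pd (\<lambda>y. g y j i) l x - pd (\<lambda>y. g y j l) i x)))"
    by (simp only: contract_D[OF K U x])
  also have "(\<Sum>l\<in>UNIV. xi x l * (pd (\<lambda>y. g y l i) j x + pd (\<lambda>y. g y j i) l x - pd (\<lambda>y. g y j l) i x))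
     = (\<Sum>l\<in>UNIV. xi x l * (pd (\<lambda>y. g y i l) j x + pd (\<lambda>y. g y i j) l x - pd (\<lambda>y. g y l j) i x))"
    using pdg_sym[OF F(1) U x] by metis
  finally have "lie_g g xi x i j = (\<Sum>l\<in>UNIV. xi x l * pd (\<lambda>y. g y i j) l x)
     + (g x i j - eta x i * eta x j - (1/2) * (\<Sum>l\<in>UNIV. xi x l * (pd (\<lambda>y. g y l j) i x + pd (\<lambda>y. g y i j) l x - pd (\<lambda>y. g y i l) j x)))
     + (g x i j - eta x j * eta x i - (1/2) * (\<Sum>l\<in>UNIV. xi x l * (pd (\<lambda>y. g y i l) j x + pd (\<lambda>y. g y i j) l x - pd (\<lambda>y. g y l j) i x)))"
    using F(4)[of j i] by simp
  also have "\<dots> = 2 * g x i j - 2 * eta x i * eta x j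
     + ((\<Sum>l\<in>UNIV. xi x l * pd (\<lambda>y. g y i j) l x) - (1/2) * (\<Sum>l\<in>UNIV. xi x l * (pd (\<lambda>y. g y l j) i x + pd (\<lambda>y. g y i j) l x - pd (\<lambda>y. g y i l) j x)
         + xi x l * (pd (\<lambda>y. g y i l) j x + pd (\<lambda>y. g y i j) l x - pd (\<lambda>y. g y l j) i x)))"
  proof -
    have "(\<Sum>l\<in>UNIV. xi x l * (pd (\<lambda>y. g y l j) i x + pd (\<lambda>y. g y i j) l x - pd (\<lambda>y. g y i l) j x)
         + xi x l * (pd (\<lambda>y. g y i l) j x + pd (\<lambda>y. g y i j) l x - pd (\<lambda>y. g y l j) i x))
      = (\<Sum>l\<in>UNIV. xi x l * (pd (\<lambda>y. g y l j) i x + pd (\<lambda>y. g y i j) l x - pd (\<lambda>y. g y i l) j x))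
        + (\<Sum>l\<in>UNIV. xi x l * (pd (\<lambda>y. g y i l) j x + pd (\<lambda>y. g y i j) l x - pd (\<lambda>y. g y l j) i x))"
      by (rule sum.distrib)
    then show ?thesis by (simp add: algebra_simps)
  qed
  also have "(\<Sum>l\<in>UNIV. xi x l * (pd (\<lambda>y. g y l j) i x + pd (\<lambda>y. g y i j) l x - pd (\<lambda>y. g y i l) j x)
         + xi x l * (pd (\<lambda>y. g y i l) j x + pd (\<lambda>y. g y i j) l x - pd (\<lambda>y. g y l j) i x))
       = 2 * (\<Sum>l\<in>UNIV. xi x l * pd (\<lambda>y. g y i j) l x)"
  proof -
    have e: "\<And>l. xi x l * (pd (\<lambda>y. g y l j) i x + pd (\<lambda>y. g y i j) l x - pd (\<lambda>y. g y i l) j x)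
         + xi x l * (pd (\<lambda>y. g y i l) j x + pd (\<lambda>y. g y i j) l x - pd (\<lambda>y. g y l j) i x) = 2 * (xi x l * pd (\<lambda>y. g y i j) l x)"
      by (simp add: algebra_simps)
    show ?thesis unfolding e by (simp add: sum_distrib_left)
  qed
  finally show ?thesis by simp
qed

lemma curv_alg:
  fixes G :: "'m::finite \<Rightarrow> 'm \<Rightarrow> 'm \<Rightarrow> real" and dG :: "'m \<Rightarrow> 'm \<Rightarrow> 'm \<Rightarrow> 'm \<Rightarrow> real"
    and xi eta :: "'m \<Rightarrow> real" and D E :: "'m \<Rightarrow> 'm \<Rightarrow> real" and Q :: "'m \<Rightarrow> 'm \<Rightarrow> 'm \<Rightarrow> real"
  assumes H1: "\<And>l i j. (\<Sum>k\<in>UNIV. dG i l j k * xi k) = - E i j * xi l - eta j * D i l - Q i j l - (\<Sum>k\<in>UNIV. G l j k * D i k)"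
    and H2: "\<And>i k. D i k = (if k = i then 1 else 0) - eta i * xi k - (\<Sum>m\<in>UNIV. G k i m * xi m)"
    and H3: "\<And>i j l. Q i j l = Q j i l"
    and H4: "\<And>l i j. G l i j = G l j i"
    and H5: "(\<Sum>i\<in>UNIV. eta i * xi i) = 1"
  shows "(\<Sum>j\<in>UNIV. \<Sum>k\<in>UNIV. (\<Sum>a\<in>UNIV. dG a a j k - dG j a a k
            + (\<Sum>m\<in>UNIV. G a a m * G m j k - G a j m * G m a k)) * xi j * xi k) = 1 - real CARD('m)"
proof -
  define C where "C l j = (\<Sum>k\<in>UNIV. G l j k * xi k)" for l j
  have D': "D i k = (if k = i then 1 else 0) - eta i * xi k - C k i" for i k
    using H2 unfolding C_def .
  define P1 where "P1 a j = (\<Sum>k\<in>UNIV. dG a a j k * xi k)" for a j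
  define P2 where "P2 a j = (\<Sum>k\<in>UNIV. dG j a a k * xi k)" for a j
  have inner_a: "(\<Sum>k\<in>UNIV. (dG a a j k - dG j a a k + (\<Sum>m\<in>UNIV. G a a m * G m j k - G a j m * G m a k)) * xi k)
     = P1 a j - P2 a j + (\<Sum>m\<in>UNIV. G a a m * C m j - G a j m * C m a)" for a j
  proof -
    have "(\<Sum>k\<in>UNIV. (\<Sum>m\<in>UNIV. G a a m * G m j k - G a j m * G m a k) * xi k)
        = (\<Sum>k\<in>UNIV. \<Sum>m\<in>UNIV. (G a a m * G m j k - G a j m * G m a k) * xi k)"
      by (simp add: sum_distrib_right)
    also have "\<dots> = (\<Sum>m\<in>UNIV. \<Sum>k\<in>UNIV. (G a a m * G m j k - G a j m * G m a k) * xi k)"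
      by (rule sum.swap)
    also have "\<dots> = (\<Sum>m\<in>UNIV. G a a m * C m j - G a j m * C m a)"
      unfolding C_def by (simp add: sum_distrib_left sum_subtractf algebra_simps)
    finally have m: "(\<Sum>k\<in>UNIV. (\<Sum>m\<in>UNIV. G a a m * G m j k - G a j m * G m a k) * xi k) = (\<Sum>m\<in>UNIV. G a a m * C m j - G a j m * C m a)" .
    have "(\<Sum>k\<in>UNIV. (dG a a j k - dG j a a k + (\<Sum>m\<in>UNIV. G a a m * G m j k - G a j m * G m a k)) * xi k)
       = (\<Sum>k\<in>UNIV. dG a a j k * xi k) - (\<Sum>k\<in>UNIV. dG j a a k * xi k) + (\<Sum>k\<in>UNIV. (\<Sum>m\<in>UNIV. G a a m * G m j k - G a j m * G m a k) * xi k)"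
      by (simp add: sum.distrib sum_subtractf algebra_simps)
    then show ?thesis unfolding m P1_def P2_def .
  qed
  have inner_j: "(\<Sum>k\<in>UNIV. (\<Sum>a\<in>UNIV. dG a a j k - dG j a a k
            + (\<Sum>m\<in>UNIV. G a a m * G m j k - G a j m * G m a k)) * xi j * xi k)
      = xi j * (\<Sum>a\<in>UNIV. P1 a j - P2 a j + (\<Sum>m\<in>UNIV. G a a m * C m j - G a j m * C m a))" for j
  proof -
    have "(\<Sum>k\<in>UNIV. (\<Sum>a\<in>UNIV. dG a a j k - dG j a a k
            + (\<Sum>m\<in>UNIV. G a a m * G m j k - G a j m * G m a k)) * xi j * xi k)
       = xi j * (\<Sum>k\<in>UNIV. \<Sum>a\<in>UNIV. (dG a a j k - dG j a a k
            + (\<Sum>m\<in>UNIV. G a a m * G m j k - G a j m * G m a k)) * xi k)"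
      by (simp add: sum_distrib_left sum_distrib_right mult.assoc mult.left_commute)
    also have "\<dots> = xi j * (\<Sum>a\<in>UNIV. \<Sum>k\<in>UNIV. (dG a a j k - dG j a a k
            + (\<Sum>m\<in>UNIV. G a a m * G m j k - G a j m * G m a k)) * xi k)"
      by (subst sum.swap) (rule refl)
    also have "\<dots> = xi j * (\<Sum>a\<in>UNIV. P1 a j - P2 a j + (\<Sum>m\<in>UNIV. G a a m * C m j - G a j m * C m a))"
      unfolding inner_a ..
    finally show ?thesis .
  qed
  have W: "P1 a j - P2 a j + (\<Sum>m\<in>UNIV. G a a m * C m j - G a j m * C m a)
      = - E a j * xi a + E j a * xi a - eta j + eta a * (if a = j then 1 else 0)" for a j
  proof -
    have s1: "(\<Sum>k\<in>UNIV. G a j k * D a k) = G a j a - eta a * C a j - (\<Sum>k\<in>UNIV. G a j k * C k a)"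
      unfolding D' C_def by (simp add: sum_subtractf sum.distrib right_diff_distrib sum_distrib_left algebra_simps)
    have s2: "(\<Sum>k\<in>UNIV. G a a k * D j k) = G a a j - eta j * C a a - (\<Sum>k\<in>UNIV. G a a k * C k j)"
      unfolding D' C_def by (simp add: sum_subtractf sum.distrib right_diff_distrib sum_distrib_left algebra_simps)
    have p1: "P1 a j = - E a j * xi a - eta j * D a a - Q a j a - (\<Sum>k\<in>UNIV. G a j k * D a k)"
      unfolding P1_def by (rule H1)
    have p2: "P2 a j = - E j a * xi a - eta a * D j a - Q j a a - (\<Sum>k\<in>UNIV. G a a k * D j k)"
      unfolding P2_def by (rule H1)
    have ms: "(\<Sum>m\<in>UNIV. G a a m * C m j - G a j m * C m a) = (\<Sum>k\<in>UNIV. G a a k * C k j) - (\<Sum>k\<in>UNIV. G a j k * C k a)"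
      by (simp add: sum_subtractf)
    show ?thesis unfolding p1 p2 s1 s2 ms D'[of a a] D'[of j a] using H3[of a j a] H4[of a j a]
      by (simp add: algebra_simps)
  qed
  have "(\<Sum>j\<in>UNIV. \<Sum>k\<in>UNIV. (\<Sum>a\<in>UNIV. dG a a j k - dG j a a k
            + (\<Sum>m\<in>UNIV. G a a m * G m j k - G a j m * G m a k)) * xi j * xi k)
      = (\<Sum>j\<in>UNIV. xi j * (\<Sum>a\<in>UNIV. - E a j * xi a + E j a * xi a - eta j + eta a * (if a = j then 1 else 0)))"
    unfolding inner_j W ..
  also have "\<dots> = (\<Sum>j\<in>UNIV. \<Sum>a\<in>UNIV. xi j * xi a * E j a) - (\<Sum>j\<in>UNIV. \<Sum>a\<in>UNIV. xi j * xi a * E a j)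
      - real CARD('m) * (\<Sum>j\<in>UNIV. eta j * xi j) + (\<Sum>j\<in>UNIV. eta j * xi j)"
    by (simp add: sum.distrib sum_subtractf sum_distrib_left sum_distrib_right algebra_simps)
  also have "(\<Sum>j\<in>UNIV. \<Sum>a\<in>UNIV. xi j * xi a * E a j) = (\<Sum>j\<in>UNIV. \<Sum>a\<in>UNIV. xi j * xi a * E j a)"
    by (subst sum.swap) (simp add: mult.commute)
  finally show ?thesis using H5 by simp
qed

lemma H1_geom:
  fixes g :: "real^'m \<Rightarrow> 'm \<Rightarrow> 'm \<Rightarrow> real"
  assumes K: "kenmotsu U phi xi eta g" and U: "open U" and x: "x \<in> U"
  shows "(\<Sum>k\<in>UNIV. pd (\<lambda>y. christ g y l j k) i x * xi x k) =
     - pd (\<lambda>y. eta y j) i x * xi x l - eta x j * pd (\<lambda>y. xi y l) i x - pd (pd (\<lambda>y. xi y l) j) i x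
     - (\<Sum>k\<in>UNIV. christ g x l j k * pd (\<lambda>y. xi y k) i x)"
proof -
  note F = ken_facts[OF K x]
  have xid: "(\<lambda>y. xi y k) differentiable (at x)" for k using F(2) U x by (rule smooth_diff_at)
  have etad: "(\<lambda>y. eta y k) differentiable (at x)" for k using F(3) U x by (rule smooth_diff_at)
  have xipd: "pd (\<lambda>y. xi y k) m differentiable (at x)" for k m using smooth_pd[OF F(2)] U x by (rule smooth_diff_at)
  have chd: "(\<lambda>y. christ g y a b c) differentiable (at x)" for a b c by (rule christ_differentiable[OF F(1) U x])
  have eqU: "(\<Sum>k\<in>UNIV. christ g y l j k * xi y k) = (if l = j then 1 else 0) - eta y j * xi y l - pd (\<lambda>y. xi y l) j y"
    if "y \<in> U" for y
    using ken_facts(7)[OF K that, of l j] by linarith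
  have "pd (\<lambda>y. \<Sum>k\<in>UNIV. christ g y l j k * xi y k) i x = (\<Sum>k\<in>UNIV. pd (\<lambda>y. christ g y l j k * xi y k) i x)"
    by (rule pd_sum) (auto intro!: differentiable_mult chd xid)
  also have "\<dots> = (\<Sum>k\<in>UNIV. pd (\<lambda>y. christ g y l j k) i x * xi x k + christ g x l j k * pd (\<lambda>y. xi y k) i x)"
    by (rule sum.cong[OF refl]) (rule pd_mult[OF chd xid])
  finally have A: "pd (\<lambda>y. \<Sum>k\<in>UNIV. christ g y l j k * xi y k) i x =
     (\<Sum>k\<in>UNIV. pd (\<lambda>y. christ g y l j k) i x * xi x k) + (\<Sum>k\<in>UNIV. christ g x l j k * pd (\<lambda>y. xi y k) i x)"
    by (simp add: sum.distrib)
  have "pd (\<lambda>y. \<Sum>k\<in>UNIV. christ g y l j k * xi y k) i x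
      = pd (\<lambda>y. (if l = j then 1 else 0) - eta y j * xi y l - pd (\<lambda>y. xi y l) j y) i x"
    by (rule pd_local[OF U x]) (rule eqU)
  also have "\<dots> = pd (\<lambda>y. (if l = j then 1 else 0) - eta y j * xi y l) i x - pd (pd (\<lambda>y. xi y l) j) i x"
    by (rule pd_diff) (intro differentiable_diff differentiable_mult differentiable_const etad xid xipd)+
  also have "pd (\<lambda>y. (if l = j then 1 else 0) - eta y j * xi y l) i x
      = pd (\<lambda>y. (if l = j then 1 else 0)) i x - pd (\<lambda>y. eta y j * xi y l) i x"
    by (rule pd_diff) (intro differentiable_mult differentiable_const etad xid)+
  also have "pd (\<lambda>y. eta y j * xi y l) i x = pd (\<lambda>y. eta y j) i x * xi x l + eta x j * pd (\<lambda>y. xi y l) i x"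
    by (rule pd_mult[OF etad xid])
  finally have B: "pd (\<lambda>y. \<Sum>k\<in>UNIV. christ g y l j k * xi y k) i x =
      - pd (\<lambda>y. eta y j) i x * xi x l - eta x j * pd (\<lambda>y. xi y l) i x - pd (pd (\<lambda>y. xi y l) j) i x"
    by (simp add: pd_const)
  from A B show ?thesis by linarith
qed

lemma ricci_xi:
  fixes g :: "real^'m \<Rightarrow> 'm \<Rightarrow> 'm \<Rightarrow> real"
  assumes K: "kenmotsu U phi xi eta g" and U: "open U" and x: "x \<in> U"
  shows "bil (ricci g x) (vecf (xi x)) (vecf (xi x)) = 1 - real CARD('m)"
proof -
  note F = ken_facts[OF K x]
  have H3: "pd (pd (\<lambda>y. xi y l) j) i x = pd (pd (\<lambda>y. xi y l) i) j x" for i j l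
  proof (rule schwarz[OF U x])
    show "(\<lambda>y. xi y l) differentiable_on U" by (rule smooth_diff_on[OF F(2)])
    show "pd (\<lambda>y. xi y l) j differentiable_on U" by (rule smooth_diff_on[OF smooth_pd[OF F(2)]])
    show "pd (\<lambda>y. xi y l) i differentiable_on U" by (rule smooth_diff_on[OF smooth_pd[OF F(2)]])
    show "continuous_on U (pd (pd (\<lambda>y. xi y l) j) i)" by (rule smooth_cont[OF smooth_pd[OF smooth_pd[OF F(2)]]])
    show "continuous_on U (pd (pd (\<lambda>y. xi y l) i) j)" by (rule smooth_cont[OF smooth_pd[OF smooth_pd[OF F(2)]]])
  qed
  have H2: "pd (\<lambda>y. xi y k) i x = (if k = i then 1 else 0) - eta x i * xi x k - (\<Sum>m\<in>UNIV. christ g x k i m * xi x m)" for i k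
    using F(7)[of k i] by linarith
  have main: "(\<Sum>j\<in>UNIV. \<Sum>k\<in>UNIV. (\<Sum>a\<in>UNIV. pd (\<lambda>y. christ g y a j k) a x - pd (\<lambda>y. christ g y a a k) j x
            + (\<Sum>m\<in>UNIV. christ g x a a m * christ g x m j k - christ g x a j m * christ g x m a k)) * xi x j * xi x k)
        = 1 - real CARD('m)"
    by (rule curv_alg[where dG = "\<lambda>i l j k. pd (\<lambda>y. christ g y l j k) i x" and G = "christ g x"
          and E = "\<lambda>i j. pd (\<lambda>y. eta y j) i x" and D = "\<lambda>i k. pd (\<lambda>y. xi y k) i x"
          and Q = "\<lambda>i j l. pd (pd (\<lambda>y. xi y l) j) i x", OF H1_geom[OF K U x] H2 H3
          christ_sym[OF F(1) U x] F(5)])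
  show ?thesis unfolding bil_def ricci_def riemann_def vecf_def using main by simp
qed

lemma bil_lie:
  fixes g :: "real^'m \<Rightarrow> 'm \<Rightarrow> 'm \<Rightarrow> real"
  assumes K: "kenmotsu U phi xi eta g" and U: "open U" and x: "x \<in> U"
  shows "bil (lie_g g xi x) v w = 2 * bil (g x) v w - 2 * form1 (eta x) v * form1 (eta x) w"
proof -
  have "bil (lie_g g xi x) v w = (\<Sum>i\<in>UNIV. \<Sum>j\<in>UNIV. 2 * (g x i j * v$i * w$j) - 2 * ((eta x i * v$i) * (eta x j * w$j)))"
    unfolding bil_def lie_formula[OF K U x] by (simp add: algebra_simps)
  also have "\<dots> = 2 * bil (g x) v w - 2 * ((\<Sum>i\<in>UNIV. eta x i * v$i) * (\<Sum>j\<in>UNIV. eta x j * w$j))"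
  proof -
    have pr: "(\<Sum>i\<in>UNIV. eta x i * v$i) * (\<Sum>j\<in>UNIV. eta x j * w$j) = (\<Sum>i\<in>UNIV. \<Sum>j\<in>UNIV. (eta x i * v$i) * (eta x j * w$j))"
      by (rule sum_product)
    show ?thesis unfolding pr bil_def by (simp add: sum_subtractf sum_distrib_left)
  qed
  finally show ?thesis unfolding form1_def by simp
qed

theorem theorem3p1:
  fixes U :: "(real^'m) set" and n :: nat
    and g :: "real^'m \<Rightarrow> 'm \<Rightarrow> 'm \<Rightarrow> real" and phi :: "real^'m \<Rightarrow> 'm \<Rightarrow> 'm \<Rightarrow> real"
    and xi :: "real^'m \<Rightarrow> 'm \<Rightarrow> real" and eta :: "real^'m \<Rightarrow> 'm \<Rightarrow> real"
    and p :: "real^'m \<Rightarrow> real" and lam mu :: real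
  assumes dim: "CARD('m) = 2 * n + 1"
    and U: "open U"
    and K: "kenmotsu U phi xi eta g"
    and soliton: "\<forall>x\<in>U. \<forall>v w.
        bil (lie_g g xi x) v w + 2 * bil (ricci g x) v w
        + (2 * lam - scal g x + (p x + 2 / real (2 * n + 1))) * bil (g x) v w
        + 2 * mu * form1 (eta x) v * form1 (eta x) w = 0"
  shows "eta_einstein U eta g \<and>
         (\<forall>x\<in>U. scal g x = (p x + 2 / real (2 * n + 1)) - 4 * real n + 2 * lam + 2 * mu)"
proof
  show "eta_einstein U eta g"
    unfolding eta_einstein_def
  proof (intro exI ballI allI)
    fix x v w assume x: "x \<in> U"
    have s: "bil (lie_g g xi x) v w + 2 * bil (ricci g x) v w
        + (2 * lam - scal g x + (p x + 2 / real (2 * n + 1))) * bil (g x) v w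
        + 2 * mu * form1 (eta x) v * form1 (eta x) w = 0" using soliton x by blast
    define c where "c = 2 * lam - scal g x + (p x + 2 / real (2 * n + 1))"
    have s': "2 * bil (g x) v w - 2 * form1 (eta x) v * form1 (eta x) w + 2 * bil (ricci g x) v w
        + c * bil (g x) v w + 2 * mu * (form1 (eta x) v * form1 (eta x) w) = 0"
      using s unfolding bil_lie[OF K U x] c_def[symmetric] by (simp add: mult.assoc)
    show "bil (ricci g x) v w = (- 1 - (2 * lam - scal g x + (p x + 2 / real (2 * n + 1))) / 2) * bil (g x) v w
        + (1 - mu) * form1 (eta x) v * form1 (eta x) w"
      unfolding c_def[symmetric] using s' by (simp add: algebra_simps)
  qed
  show "\<forall>x\<in>U. scal g x = (p x + 2 / real (2 * n + 1)) - 4 * real n + 2 * lam + 2 * mu"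
  proof
    fix x assume x: "x \<in> U"
    have A: "almost_contact_metric U phi xi eta g" using K by (simp add: kenmotsu_def)
    have e1: "form1 (eta x) (vecf (xi x)) = 1" using A x by (simp add: almost_contact_metric_def)
    have g1: "bil (g x) (vecf (xi x)) (vecf (xi x)) = 1" using A x e1 by (simp add: almost_contact_metric_def)
    have s: "bil (lie_g g xi x) (vecf (xi x)) (vecf (xi x)) + 2 * bil (ricci g x) (vecf (xi x)) (vecf (xi x))
        + (2 * lam - scal g x + (p x + 2 / real (2 * n + 1))) * bil (g x) (vecf (xi x)) (vecf (xi x))
        + 2 * mu * form1 (eta x) (vecf (xi x)) * form1 (eta x) (vecf (xi x)) = 0" using soliton x by blast
    then show "scal g x = (p x + 2 / real (2 * n + 1)) - 4 * real n + 2 * lam + 2 * mu"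
      unfolding bil_lie[OF K U x] ricci_xi[OF K U x] e1 g1 dim by simp
  qed
qed

end
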